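(* Let $\mathbf i,\mathbf i'\in I^{(\infty)}$ be related by a 6-move $\mathbf i'=\zeta_k\mathbf i$. Then $$\widetilde B^{\mathbf i'}=\sigma_{k+4}\sigma_{k+2}\sigma_k\,\mu_k\mu_{k+3}\mu_{k+2}\mu_k\mu_{k+1}\mu_{k+3}\mu_k\mu_{k+2}\mu_{k+1}\mu_k\,\widetilde B^{\mathbf i}$$ (mutations applied right to left: in directions $k,k+1,k+2,k,k+3,k+1,k,k+2,k+3,k$, then the permutations).
   Context: Let $\mathfrak g$ be a complex finite-dimensional simple Lie algebra with index set $I$ and Cartan matrix $\mathsf C=(\mathsf c_{i,j})_{i,j\in I}$. $\mathbb N=\{1,2,\dots\}$, $[a]_+=\max(a,0)$. $I^{(\infty)}$ is the set of sequences $\mathbf i=(i_u)_{u\in\mathbb N}\in I^{\mathbb N}$ in which every element of $I$ occurs infinitely often; $u^+=\min\{v>u:i_v=i_u\}$, $u^-=\max(\{v<u:i_v=i_u\}\cup\{0\})$. The exchange matrix $\widetilde B^{\mathbf i}=(b_{u,v})_{u,v\in\mathbb N}$: $b_{u,v}=1$ if $v=u^+$; $-1$ if $v=u^-$; $\mathsf c_{i_u,i_v}$ if $u<v<u^+<v^+$; $-\mathsf c_{i_u,i_v}$ if $v<u<v^+<u^+$; $0$ otherwise. Matrix mutation: $\mu_k(\widetilde B)=E\widetilde BF$ with $e_{u,v}=\delta_{u,v}$ ($v\ne k$), $e_{k,k}=-1$, $e_{u,k}=[-b_{u,k}]_+$ ($u\ne k$), $f_{u,v}=\delta_{u,v}$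 ($u\ne k$), $f_{k,k}=-1$, $f_{k,v}=[b_{k,v}]_+$ ($v\ne k$). For a permutation $\pi$ of $\mathbb N$, $(\pi\widetilde B)_{u,v}=b_{\pi^{-1}(u),\pi^{-1}(v)}$; $\sigma_k$ is the transposition of $k,k+1$. A 6-move $\mathbf i'=\zeta_k\mathbf i$ means $i_k=i_{k+2}=i_{k+4}=i'_{k+1}=i'_{k+3}=i'_{k+5}$, $i_{k+1}=i_{k+3}=i_{k+5}=i'_k=i'_{k+2}=i'_{k+4}$, $i_u=i'_u$ for $u\notin[k,k+5]$, and $\mathsf c_{i_{k+1},i_k}\mathsf c_{i_k,i_{k+1}}=3$ (so $\mathfrak g$ is of type $G_2$). *)

theory Defs
  imports Complex_Main "HOL-Library.Infinite_Set"
begin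

definition is_simple_cartan_matrix :: "('i::finite \<Rightarrow> 'i \<Rightarrow> int) \<Rightarrow> bool" where
  "is_simple_cartan_matrix C \<longleftrightarrow>
     (\<forall>i. C i i = 2) \<and>
     (\<forall>i j. i \<noteq> j \<longrightarrow> C i j \<le> 0) \<and>
     (\<forall>i j. C i j = 0 \<longleftrightarrow> C j i = 0) \<and>
     (\<exists>d :: 'i \<Rightarrow> int. (\<forall>i. d i > 0) \<and> (\<forall>i j. d i * C i j = d j * C j i) \<and>
        (\<forall>x :: 'i \<Rightarrow> real. x \<noteq> (\<lambda>_. 0) \<longrightarrow>
            (\<Sum>i\<in>UNIV. \<Sum>j\<in>UNIV. x i * real_of_int (d i * C i j) * x j) > 0)) \<and>
     (\<forall>J :: 'i set. J \<noteq> {} \<and> J \<noteq> UNIV \<longrightarrow> (\<exists>j\<in>J. \<exists>k\<in>-J. C j k \<noteq> 0))"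

text \<open>Sequences indexed by the positive integers (the value at 0 is irrelevant).\<close>
definition I_infty :: "(nat \<Rightarrow> 'i) set" where
  "I_infty = {ii. \<forall>a. infinite {u. 1 \<le> u \<and> ii u = a}}"

definition succ_idx :: "(nat \<Rightarrow> 'i) \<Rightarrow> nat \<Rightarrow> nat" where
  "succ_idx ii u = (LEAST v. u < v \<and> ii v = ii u)"

definition pred_idx :: "(nat \<Rightarrow> 'i) \<Rightarrow> nat \<Rightarrow> nat" where
  "pred_idx ii u = Max ({v. 1 \<le> v \<and> v < u \<and> ii v = ii u} \<union> {0})"

type_synonym imat = "nat \<Rightarrow> nat \<Rightarrow> int"

text \<open>Exchange matrix of ii (entries with an index 0 are set to 0; they lie outside N).\<close>
definition exch_matrix :: "('i \<Rightarrow> 'i \<Rightarrow> int) \<Rightarrow> (nat \<Rightarrow> 'i) \<Rightarrow> imat" where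
  "exch_matrix C ii u v =
     (if u = 0 \<or> v = 0 then 0
      else if v = succ_idx ii u then 1
      else if v = pred_idx ii u then -1
      else if u < v \<and> v < succ_idx ii u \<and> succ_idx ii u < succ_idx ii v then C (ii u) (ii v)
      else if v < u \<and> u < succ_idx ii v \<and> succ_idx ii v < succ_idx ii u then - C (ii u) (ii v)
      else 0)"

text \<open>Product of N x N matrices (summing over the indices w \<ge> 1 contributing nonzero terms;
for the matrices used below these are finitely many).\<close>
definition mat_mul :: "imat \<Rightarrow> imat \<Rightarrow> imat" where
  "mat_mul A B u v = (\<Sum>w\<in>{w. 1 \<le> w \<and> A u w \<noteq> 0 \<and> B w v \<noteq> 0}. A u w * B w v)"

definition pos_part :: "int \<Rightarrow> int" where
  "pos_part a = max a 0"

definition mutE :: "nat \<Rightarrow> imat \<Rightarrow> imat" where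
  "mutE k B u v = (if v \<noteq> k then (if u = v then 1 else 0)
                   else if u = k then -1 else pos_part (- B u k))"

definition mutF :: "nat \<Rightarrow> imat \<Rightarrow> imat" where
  "mutF k B u v = (if u \<noteq> k then (if u = v then 1 else 0)
                   else if v = k then -1 else pos_part (B k v))"

definition mutate :: "nat \<Rightarrow> imat \<Rightarrow> imat" where
  "mutate k B = mat_mul (mat_mul (mutE k B) B) (mutF k B)"

definition perm_mat :: "(nat \<Rightarrow> nat) \<Rightarrow> imat \<Rightarrow> imat" where
  "perm_mat \<pi> B u v = B (inv \<pi> u) (inv \<pi> v)"

definition swap_adj :: "nat \<Rightarrow> nat \<Rightarrow> nat" where
  "swap_adj k u = (if u = k then k + 1 else if u = k + 1 then k else u)"

definition six_move :: "('i \<Rightarrow> 'i \<Rightarrow> int) \<Rightarrow> nat \<Rightarrow> (nat \<Rightarrow> 'i) \<Rightarrow> (nat \<Rightarrow> 'i) \<Rightarrow> bool" where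
  "six_move C k ii ii' \<longleftrightarrow> 1 \<le> k \<and>
     ii k = ii (k+2) \<and> ii (k+2) = ii (k+4) \<and> ii (k+4) = ii' (k+1) \<and>
     ii' (k+1) = ii' (k+3) \<and> ii' (k+3) = ii' (k+5) \<and>
     ii (k+1) = ii (k+3) \<and> ii (k+3) = ii (k+5) \<and> ii (k+5) = ii' k \<and>
     ii' k = ii' (k+2) \<and> ii' (k+2) = ii' (k+4) \<and>
     (\<forall>u. 1 \<le> u \<and> (u < k \<or> k + 5 < u) \<longrightarrow> ii u = ii' u) \<and>
     C (ii (k+1)) (ii k) * C (ii k) (ii (k+1)) = 3"

end

theory Submission
  imports Defs
begin


lemma mat_mul_eq:
  assumes "finite F" "\<forall>w\<in>F. w\<ge>1" "\<forall>w. 1 \<le> w \<and> A u w \<noteq> 0 \<and> B w v \<noteq> 0 \<longrightarrow> w \<in> F"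
  shows "mat_mul A B u v = (\<Sum>w\<in>F. A u w * B w v)"
  unfolding mat_mul_def
  by (rule sum.mono_neutral_left) (use assms in auto)

definition mEB :: "nat \<Rightarrow> imat \<Rightarrow> imat" where
  "mEB m B u w = (if u = m then - B m w else B u w + pos_part (- B u m) * B m w)"

definition mut' :: "nat \<Rightarrow> imat \<Rightarrow> imat" where
  "mut' m B u v = (if v = m then - mEB m B u m else mEB m B u v + mEB m B u m * pos_part (B m v))"

definition zr :: "imat \<Rightarrow> bool" where
  "zr B \<longleftrightarrow> (\<forall>v. B 0 v = 0) \<and> (\<forall>u. B u 0 = 0)"

lemma EB_eq:
  assumes "m \<ge> 1" "zr B"
  shows "mat_mul (mutE m B) B u w = mEB m B u w"
proof (cases "u = 0")
  case True
  have "mat_mul (mutE m B) B u w = (\<Sum>x\<in>{m}. mutE m B u x * B x w)"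
    by (rule mat_mul_eq) (use assms True in \<open>auto simp: mutE_def split: if_splits\<close>)
  then show ?thesis using assms True by (simp add: mEB_def mutE_def zr_def)
next
  case False
  show ?thesis
  proof (cases "u = m")
    case True
    have "mat_mul (mutE m B) B u w = (\<Sum>x\<in>{m}. mutE m B u x * B x w)"
      by (rule mat_mul_eq) (use assms True in \<open>auto simp: mutE_def split: if_splits\<close>)
    then show ?thesis using assms True by (simp add: mEB_def mutE_def)
  next
    case nm: False
    have "mat_mul (mutE m B) B u w = (\<Sum>x\<in>{u,m}. mutE m B u x * B x w)"
      by (rule mat_mul_eq) (use assms False in \<open>auto simp: mutE_def split: if_splits\<close>)
    then show ?thesis using assms nm by (simp add: mEB_def mutE_def)
  qed
qed

lemma mutate_eq:
  assumes "m \<ge> 1" "zr B"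
  shows "mutate m B = mut' m B"
proof (intro ext)
  fix u v
  have EB: "\<And>w. mat_mul (mutE m B) B u w = mEB m B u w" using EB_eq assms by blast
  show "mutate m B u v = mut' m B u v"
  proof (cases "v = 0")
    case True
    have "mutate m B u v = (\<Sum>x\<in>{m}. mat_mul (mutE m B) B u x * mutF m B x v)"
      unfolding mutate_def
      by (rule mat_mul_eq) (use assms True in \<open>auto simp: mutF_def split: if_splits\<close>)
    then show ?thesis using assms True by (simp add: EB mut'_def mutF_def mEB_def zr_def pos_part_def)
  next
    case False
    show ?thesis
    proof (cases "v = m")
      case True
      have "mutate m B u v = (\<Sum>x\<in>{m}. mat_mul (mutE m B) B u x * mutF m B x v)"
        unfolding mutate_def
        by (rule mat_mul_eq) (use assms True in \<open>auto simp: mutF_def split: if_splits\<close>)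
      then show ?thesis using assms True by (simp add: EB mut'_def mutF_def)
    next
      case nm: False
      have "mutate m B u v = (\<Sum>x\<in>{v,m}. mat_mul (mutE m B) B u x * mutF m B x v)"
        unfolding mutate_def
        by (rule mat_mul_eq) (use assms False in \<open>auto simp: mutF_def split: if_splits\<close>)
      then show ?thesis using assms nm by (simp add: EB mut'_def mutF_def)
    qed
  qed
qed

lemma zr_mut': assumes "m \<ge> 1" "zr B" shows "zr (mut' m B)"
  using assms by (auto simp: zr_def mut'_def mEB_def pos_part_def)


lemma succ_exists: "jj \<in> I_infty \<Longrightarrow> \<exists>v. x < v \<and> jj v = jj x"
proof -
  assume "jj \<in> I_infty"
  then have "infinite {u. 1 \<le> u \<and> jj u = jj x}" by (auto simp: I_infty_def)
  then obtain n where "n > x" "n \<in> {u. 1 \<le> u \<and> jj u = jj x}"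
    using infinite_nat_iff_unbounded by blast
  then show ?thesis by auto
qed

lemma succ_props: "jj \<in> I_infty \<Longrightarrow> x < succ_idx jj x \<and> jj (succ_idx jj x) = jj x"
  unfolding succ_idx_def using succ_exists[of jj x] by (rule LeastI_ex) 

lemma succ_min: "x < z \<Longrightarrow> jj z = jj x \<Longrightarrow> succ_idx jj x \<le> z"
  unfolding succ_idx_def by (rule Least_le) simp

lemma succ_between: "x < z \<Longrightarrow> z < succ_idx jj x \<Longrightarrow> jj z \<noteq> jj x"
  using succ_min[of x z jj] by auto

lemma succ_eqI: "x < y \<Longrightarrow> jj y = jj x \<Longrightarrow> (\<And>z. x < z \<Longrightarrow> z < y \<Longrightarrow> jj z \<noteq> jj x) \<Longrightarrow> succ_idx jj x = y"
  unfolding succ_idx_def by (rule Least_equality) (auto simp: not_less[symmetric])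

lemma pred_fin: "finite ({v. 1 \<le> v \<and> v < (x::nat) \<and> jj v = jj x} \<union> {0})"
  apply (rule finite_subset[of _ "{..x}"]) by auto

lemma pred_ge: "1 \<le> v \<Longrightarrow> v < x \<Longrightarrow> jj v = jj x \<Longrightarrow> v \<le> pred_idx jj x"
  unfolding pred_idx_def by (rule Max_ge[OF pred_fin]) auto

lemma pred_in: "pred_idx jj x \<in> {v. 1 \<le> v \<and> v < x \<and> jj v = jj x} \<union> {0}"
  unfolding pred_idx_def by (rule Max_in[OF pred_fin]) auto

lemma pred_pos: "1 \<le> pred_idx jj x \<Longrightarrow> pred_idx jj x < x \<and> jj (pred_idx jj x) = jj x"
  using pred_in[of jj x] by auto

lemma pred_lt: "1 \<le> x \<Longrightarrow> pred_idx jj x < x"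
  using pred_in[of jj x] by auto

lemma pred_between: "pred_idx jj x < z \<Longrightarrow> z < x \<Longrightarrow> jj z \<noteq> jj x"
  using pred_ge[of z x jj] by auto

lemma pred_eqI: "1 \<le> y \<Longrightarrow> y < x \<Longrightarrow> jj y = jj x \<Longrightarrow> (\<And>z. y < z \<Longrightarrow> z < x \<Longrightarrow> jj z \<noteq> jj x) \<Longrightarrow> pred_idx jj x = y"
proof -
  assume a: "1 \<le> y" "y < x" "jj y = jj x" "\<And>z. y < z \<Longrightarrow> z < x \<Longrightarrow> jj z \<noteq> jj x"
  have "y \<le> pred_idx jj x" using pred_ge a by blast
  moreover have "\<not> y < pred_idx jj x"
  proof
    assume "y < pred_idx jj x"
    then show False using pred_pos[of jj x] a(4)[of "pred_idx jj x"] by auto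
  qed
  ultimately show ?thesis by auto
qed

lemma pred_eq0I: "(\<And>z. 1 \<le> z \<Longrightarrow> z < x \<Longrightarrow> jj z \<noteq> jj x) \<Longrightarrow> pred_idx jj x = 0"
  using pred_in[of jj x] by force

lemma succ_pred: "1 \<le> pred_idx jj x \<Longrightarrow> succ_idx jj (pred_idx jj x) = x"
  using pred_pos[of jj x] pred_between[of jj x] by (intro succ_eqI) auto

lemma pred_succ: "jj \<in> I_infty \<Longrightarrow> 1 \<le> x \<Longrightarrow> pred_idx jj (succ_idx jj x) = x"
  using succ_props[of jj x] succ_between[of x _ jj] by (intro pred_eqI) auto


definition idx8 :: "nat list" where "idx8 = [0,1,2,3,4,5,6,7]"

definition Lblk :: "int \<Rightarrow> int \<Rightarrow> bool \<Rightarrow> bool \<Rightarrow> bool \<Rightarrow> bool \<Rightarrow> int list list" where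
  "Lblk cab cba ea eb P sab =
    [[0, if P then cab else 0, if ea then 1 else 0, 0,0,0,0,0],
     [if P then -cba else 0, 0, if eb then cba else 0, if eb then 1 else 0, 0,0,0,0],
     [if ea then -1 else 0, if eb then -cab else 0, 0, cab, 1, 0,0,0],
     [0, if eb then -1 else 0, -cba, 0, cba, 1, 0, 0],
     [0,0,-1, -cab, 0, cab, 1, 0],
     [0,0,0,-1,-cba,0,cba,1],
     [0,0,0,0,-1,-cab,0, if sab then cab else 0],
     [0,0,0,0,0,-1, if sab then -cba else 0, 0]]"

lemma block:
  fixes C :: "'i \<Rightarrow> 'i \<Rightarrow> int" and jj :: "nat \<Rightarrow> 'i"
  assumes jj: "jj \<in> I_infty" and k: "1 \<le> k" and lx: "jj k = x" "jj (k+2) = x" "jj (k+4) = x"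
    and ly: "jj (k+1) = y" "jj (k+3) = y" "jj (k+5) = y" and xy: "x \<noteq> y"
  shows "map (\<lambda>u. map (\<lambda>v. exch_matrix C jj u v)
            [pred_idx jj k, pred_idx jj (k+1), k, k+1, k+2, k+3, k+4, k+5])
            [pred_idx jj k, pred_idx jj (k+1), k, k+1, k+2, k+3, k+4, k+5]
    = Lblk (C x y) (C y x) (1 \<le> pred_idx jj k) (1 \<le> pred_idx jj (k+1))
        (1 \<le> pred_idx jj k \<and> 1 \<le> pred_idx jj (k+1) \<and> pred_idx jj k < pred_idx jj (k+1))
        (succ_idx jj (k+4) < succ_idx jj (k+5))"
proof -
  have lx': "jj k = x" "jj (Suc (Suc k)) = x" "jj (Suc (Suc (Suc (Suc k)))) = x"
    using lx by (simp_all add: numeral_eq_Suc)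
  have ly': "jj (Suc k) = y" "jj (Suc (Suc (Suc k))) = y" "jj (Suc (Suc (Suc (Suc (Suc k))))) = y"
    using ly by (simp_all add: numeral_eq_Suc)
  have s0: "succ_idx jj k = k+2" 
  proof (rule succ_eqI)
    fix z assume "k < z" "z < k+2" then have "z = k+1" by auto
    then show "jj z \<noteq> jj k" using lx ly xy by auto
  qed (use lx ly in auto)
  have pr0: "pred_idx jj (k+2) = k" 
  proof (rule pred_eqI)
    fix z assume "k < z" "z < k+2" then have "z = k+1" by auto
    then show "jj z \<noteq> jj (k+2)" using lx ly xy by auto
  qed (use lx ly k in auto)
  have s1: "succ_idx jj (k+1) = k+3" 
  proof (rule succ_eqI)
    fix z assume "k+1 < z" "z < k+3" then have "z = k+2" by auto
    then show "jj z \<noteq> jj (k+1)" using lx ly xy by auto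
  qed (use lx ly in auto)
  have pr1: "pred_idx jj (k+3) = k+1" 
  proof (rule pred_eqI)
    fix z assume "k+1 < z" "z < k+3" then have "z = k+2" by auto
    then show "jj z \<noteq> jj (k+3)" using lx ly xy by auto
  qed (use lx ly k in auto)
  have s2: "succ_idx jj (k+2) = k+4" 
  proof (rule succ_eqI)
    fix z assume "k+2 < z" "z < k+4" then have "z = k+3" by auto
    then show "jj z \<noteq> jj (k+2)" using lx ly xy by auto
  qed (use lx ly in auto)
  have pr2: "pred_idx jj (k+4) = k+2" 
  proof (rule pred_eqI)
    fix z assume "k+2 < z" "z < k+4" then have "z = k+3" by auto
    then show "jj z \<noteq> jj (k+4)" using lx ly xy by auto
  qed (use lx ly k in auto)
  have s3: "succ_idx jj (k+3) = k+5" 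
  proof (rule succ_eqI)
    fix z assume "k+3 < z" "z < k+5" then have "z = k+4" by auto
    then show "jj z \<noteq> jj (k+3)" using lx ly xy by auto
  qed (use lx ly in auto)
  have pr3: "pred_idx jj (k+5) = k+3" 
  proof (rule pred_eqI)
    fix z assume "k+3 < z" "z < k+5" then have "z = k+4" by auto
    then show "jj z \<noteq> jj (k+5)" using lx ly xy by auto
  qed (use lx ly k in auto)
  define sa where "sa = succ_idx jj (k+4)"
  define sb where "sb = succ_idx jj (k+5)"
  have sa_f: "k+5 < sa" "jj sa = x"
  proof -
    have "k+4 < sa" "jj sa = x" using succ_props[OF jj, of "k+4"] lx unfolding sa_def by auto
    moreover have "sa \<noteq> k+5" using \<open>jj sa = x\<close> ly xy by auto
    ultimately show "k+5 < sa" "jj sa = x" by auto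
  qed
  have sb_f: "k+5 < sb" "jj sb = y"
    using succ_props[OF jj, of "k+5"] ly unfolding sb_def by auto
  have sab: "sa \<noteq> sb" using sa_f sb_f xy by auto
  define p1 where "p1 = pred_idx jj k"
  define p2 where "p2 = pred_idx jj (k+1)"
  have p1: "p1 < k" using pred_lt k unfolding p1_def by auto
  have p1x: "1 \<le> p1 \<Longrightarrow> jj p1 = x \<and> succ_idx jj p1 = k"
    using pred_pos[of jj k] succ_pred[of jj k] lx unfolding p1_def by auto
  have p2x: "1 \<le> p2 \<Longrightarrow> jj p2 = y \<and> succ_idx jj p2 = k+1"
    using pred_pos[of jj "k+1"] succ_pred[of jj "k+1"] ly unfolding p2_def by auto
  have p2: "p2 < k"
  proof -
    have "p2 < k+1" using pred_lt[of "k+1" jj] unfolding p2_def by auto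
    moreover have "p2 \<noteq> k" using p2x lx xy k by auto
    ultimately show ?thesis by auto
  qed
  have p12: "1 \<le> p1 \<Longrightarrow> p1 \<noteq> p2" using p1x p2x xy by auto
  define q1 where "q1 = pred_idx jj p1"
  define q2 where "q2 = pred_idx jj p2"
  have q1: "1 \<le> p1 \<Longrightarrow> q1 < p1" unfolding q1_def by (rule pred_lt)
  have q2: "1 \<le> p2 \<Longrightarrow> q2 < p2" unfolding q2_def by (rule pred_lt)
  have q1p2: "1 \<le> p2 \<Longrightarrow> q1 \<noteq> p2"
    using pred_pos[of jj p1] p1x p2x xy unfolding q1_def by (cases "1 \<le> q1") (auto simp: q1_def)
  have q2p1: "1 \<le> p1 \<Longrightarrow> q2 \<noteq> p1"
    using pred_pos[of jj p2] p1x p2x xy unfolding q2_def by (cases "1 \<le> q2") (auto simp: q2_def)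
  note facts = s0 s1 s2 s3 pr0 pr1 pr2 pr3 lx ly sa_def[symmetric] sb_def[symmetric]
    p1_def[symmetric] p2_def[symmetric] q1_def[symmetric] q2_def[symmetric]
  have p1x': "1 \<le> p1 \<Longrightarrow> jj p1 = x" "1 \<le> p1 \<Longrightarrow> succ_idx jj p1 = k" using p1x by auto
  have p2x': "1 \<le> p2 \<Longrightarrow> jj p2 = y" "1 \<le> p2 \<Longrightarrow> succ_idx jj p2 = k+1" using p2x by auto
  have c1: "map (\<lambda>u. map (exch_matrix C jj u) [p1, p2, k, k + 1, k + 2, k + 3, k + 4, k + 5]) [p1, p2, k, k + 1, k + 2, k + 3, k + 4, k + 5] =
    Lblk (C x y) (C y x) (1 \<le> p1) (1 \<le> p2) (1 \<le> p1 \<and> 1 \<le> p2 \<and> p1 < p2) (sa < sb)"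
    if h: "p1 = 0" "p2 = 0"
    unfolding Lblk_def list.map list.inject
    apply (insert p1 p2 sa_f sb_f sab k h)
    apply (intro conjI)
    apply (simp_all add: facts facts[simplified] exch_matrix_def)
    done
  have c2: "map (\<lambda>u. map (exch_matrix C jj u) [p1, p2, k, k + 1, k + 2, k + 3, k + 4, k + 5]) [p1, p2, k, k + 1, k + 2, k + 3, k + 4, k + 5] =
    Lblk (C x y) (C y x) (1 \<le> p1) (1 \<le> p2) (1 \<le> p1 \<and> 1 \<le> p2 \<and> p1 < p2) (sa < sb)"
    if h: "p1 = 0" "1 \<le> p2"
    unfolding Lblk_def list.map list.inject
    apply (insert p1 p2 sa_f sb_f sab k h q2[OF h(2)] p2x'[OF h(2)])
    apply (intro conjI)
    apply (simp_all add: facts facts[simplified] exch_matrix_def)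
    done
  have c3: "map (\<lambda>u. map (exch_matrix C jj u) [p1, p2, k, k + 1, k + 2, k + 3, k + 4, k + 5]) [p1, p2, k, k + 1, k + 2, k + 3, k + 4, k + 5] =
    Lblk (C x y) (C y x) (1 \<le> p1) (1 \<le> p2) (1 \<le> p1 \<and> 1 \<le> p2 \<and> p1 < p2) (sa < sb)"
    if h: "1 \<le> p1" "p2 = 0"
    unfolding Lblk_def list.map list.inject
    apply (insert p1 p2 sa_f sb_f sab k h q1[OF h(1)] p1x'[OF h(1)])
    apply (intro conjI)
    apply (simp_all add: facts facts[simplified] exch_matrix_def)
    done
  have c4: "map (\<lambda>u. map (exch_matrix C jj u) [p1, p2, k, k + 1, k + 2, k + 3, k + 4, k + 5]) [p1, p2, k, k + 1, k + 2, k + 3, k + 4, k + 5] =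
    Lblk (C x y) (C y x) (1 \<le> p1) (1 \<le> p2) (1 \<le> p1 \<and> 1 \<le> p2 \<and> p1 < p2) (sa < sb)"
    if h: "1 \<le> p1" "1 \<le> p2"
    unfolding Lblk_def list.map list.inject
    apply (insert p1 p2 sa_f sb_f sab k h q1[OF h(1)] p1x'[OF h(1)] q2[OF h(2)] p2x'[OF h(2)] q1p2[OF h(2)] q2p1[OF h(1)] p12[OF h(1)])
    apply (intro conjI)
    apply (simp_all add: facts facts[simplified] exch_matrix_def)
    done
  show ?thesis
    unfolding p1_def[symmetric] p2_def[symmetric] sa_def[symmetric] sb_def[symmetric]
    using c1 c2 c3 c4 by (cases "p1 = 0"; cases "p2 = 0") auto
qed


definition mutf :: "nat \<Rightarrow> int list list \<Rightarrow> nat \<Rightarrow> nat \<Rightarrow> int" where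
  "mutf m L i j = (let e = (\<lambda>u w. if u = m then - (L!m!w) else L!u!w + pos_part (- (L!u!m)) * (L!m!w))
     in if j = m then - e i m else e i j + e i m * pos_part (L!m!j))"

definition mutL :: "nat \<Rightarrow> int list list \<Rightarrow> int list list" where
  "mutL m L = map (\<lambda>i. map (\<lambda>j. mutf m L i j) idx8) idx8"

definition permL :: "nat list \<Rightarrow> int list list \<Rightarrow> int list list" where
  "permL t L = map (\<lambda>i. map (\<lambda>j. L!(t!i)!(t!j)) idx8) idx8"

definition mutseqL :: "int list list \<Rightarrow> int list list" where
  "mutseqL L = mutL 2 (mutL 5 (mutL 4 (mutL 2 (mutL 3 (mutL 5 (mutL 2 (mutL 4 (mutL 3 (mutL 2 L)))))))))"


lemma check_blk:
  assumes "(cab,cba) \<in> {(-1,-3),(-3,-1)}" "P \<longrightarrow> ea \<and> eb"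
  shows "permL [0,1,3,2,5,4,7,6] (mutseqL (Lblk cab cba ea eb P sab)) =
         permL [1,0,2,3,4,5,6,7] (Lblk cba cab eb ea (ea \<and> eb \<and> \<not> P) (\<not>sab))"
proof -
  from assms(1) consider "cab = -1" "cba = -3" | "cab = -3" "cba = -1" by auto
  then show ?thesis using assms(2)
    by cases (cases ea; cases eb; cases P; cases sab;
      simp add: permL_def mutseqL_def mutL_def mutf_def Lblk_def idx8_def pos_part_def Let_def)+
qed


definition tau :: "nat \<Rightarrow> nat \<Rightarrow> nat" where
  "tau k u = swap_adj k (swap_adj (k+2) (swap_adj (k+4) u))"

lemma tau_eq: "tau k u = (if u = k then k+1 else if u = k+1 then k else if u = k+2 then k+3
   else if u = k+3 then k+2 else if u = k+4 then k+5 else if u = k+5 then k+4 else u)"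
  by (auto simp: tau_def swap_adj_def)

lemma tau_tau[simp]: "tau k (tau k u) = u" by (auto simp: tau_eq)

lemma tau_out: "u < k \<or> k+5 < u \<Longrightarrow> tau k u = u" by (auto simp: tau_eq)

lemma tau_W: "k \<le> u \<Longrightarrow> u \<le> k+5 \<Longrightarrow> k \<le> tau k u \<and> tau k u \<le> k+5" by (auto simp: tau_eq)

lemma tau_0: "1 \<le> k \<Longrightarrow> tau k 0 = 0" by (auto simp: tau_eq)

lemma tau_ge1: "1 \<le> k \<Longrightarrow> (1 \<le> tau k u) = (1 \<le> u)" by (auto simp: tau_eq)

lemma tau_mono: "x < k \<or> k+5 < x \<or> y < k \<or> k+5 < y \<Longrightarrow> (x < y) = (tau k x < tau k y)"
  by (auto simp: tau_eq)

lemma inv_swap: "inv (swap_adj j) = swap_adj j"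
  by (rule inv_equality) (auto simp: swap_adj_def)

lemma perm_final:
  "perm_mat (swap_adj (k+4)) (perm_mat (swap_adj (k+2)) (perm_mat (swap_adj k) M)) u v = M (tau k u) (tau k v)"
  by (simp add: perm_mat_def inv_swap tau_def)

lemma exch_tau:
  assumes "jj' u = jj u2" "jj' v = jj v2"
   "(v = succ_idx jj' u) = (v2 = succ_idx jj u2)" "(v = pred_idx jj' u) = (v2 = pred_idx jj u2)"
   "(u = 0) = (u2 = 0)" "(v = 0) = (v2 = 0)"
   "(u < v) = (u2 < v2)" "(v < u) = (v2 < u2)"
   "(v < succ_idx jj' u) = (v2 < succ_idx jj u2)"
   "(succ_idx jj' u < succ_idx jj' v) = (succ_idx jj u2 < succ_idx jj v2)"
   "(u < succ_idx jj' v) = (u2 < succ_idx jj v2)"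
   "(succ_idx jj' v < succ_idx jj' u) = (succ_idx jj v2 < succ_idx jj u2)"
  shows "exch_matrix C jj' u v = exch_matrix C jj u2 v2"
  unfolding exch_matrix_def by (simp only: assms)

lemma mut'_row: "B u m = 0 \<Longrightarrow> u \<noteq> m \<Longrightarrow> mut' m B u v = B u v"
  by (simp add: mut'_def mEB_def pos_part_def)

lemma mut'_col: "B m v = 0 \<Longrightarrow> v \<noteq> m \<Longrightarrow> mut' m B u v = B u v"
  by (simp add: mut'_def mEB_def pos_part_def)

definition mseq :: "nat \<Rightarrow> imat \<Rightarrow> imat" where
  "mseq k B = mut' k (mut' (k+3) (mut' (k+2) (mut' k (mut' (k+1) (mut' (k+3)
        (mut' k (mut' (k+2) (mut' (k+1) (mut' k B)))))))))"

lemma mseq_row: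
  assumes "B u k = 0" "B u (k+1) = 0" "B u (k+2) = 0" "B u (k+3) = 0"
    "u \<noteq> k" "u \<noteq> k+1" "u \<noteq> k+2" "u \<noteq> k+3"
  shows "mseq k B u v = B u v"
  unfolding mseq_def using assms by (simp add: mut'_row)

lemma mseq_col:
  assumes "B k v = 0" "B (k+1) v = 0" "B (k+2) v = 0" "B (k+3) v = 0"
    "v \<noteq> k" "v \<noteq> k+1" "v \<noteq> k+2" "v \<noteq> k+3"
  shows "mseq k B u v = B u v"
  unfolding mseq_def using assms by (simp add: mut'_col)

lemma zr_mseq: "1 \<le> k \<Longrightarrow> zr B \<Longrightarrow> zr (mseq k B)"
  unfolding mseq_def by (simp add: zr_mut')

lemma mutate_mseq: "1 \<le> k \<Longrightarrow> zr B \<Longrightarrow>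
  mutate k (mutate (k+3) (mutate (k+2) (mutate k (mutate (k+1) (mutate (k+3)
        (mutate k (mutate (k+2) (mutate (k+1) (mutate k B))))))))) = mseq k B"
  unfolding mseq_def by (simp add: zr_mut' mutate_eq)

lemma lt8: "(i::nat) < 8 \<Longrightarrow> i = 0 \<or> i = 1 \<or> i = 2 \<or> i = 3 \<or> i = 4 \<or> i = 5 \<or> i = 6 \<or> i = 7"
  by auto

lemma idx8_nth: "i < 8 \<Longrightarrow> idx8 ! i = i"
  using lt8[of i] by (auto simp: idx8_def)

lemma len_idx8: "length idx8 = 8" by (simp add: idx8_def)

lemma mutL_nth: "i < 8 \<Longrightarrow> j < 8 \<Longrightarrow> mutL m L ! i ! j = mutf m L i j"
  by (simp add: mutL_def len_idx8 idx8_nth)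

lemma permL_nth: "i < 8 \<Longrightarrow> j < 8 \<Longrightarrow> permL t L ! i ! j = L ! (t!i) ! (t!j)"
  by (simp add: permL_def len_idx8 idx8_nth)

lemma corr:
  assumes base: "\<And>i j. i < 8 \<Longrightarrow> j < 8 \<Longrightarrow> B (nd!i) (nd!j) = L!i!j"
    and mm: "mm < 8" and inj: "\<And>i. i < 8 \<Longrightarrow> nd!i = nd!mm \<Longrightarrow> i = mm"
    and ij: "i < 8" "j < 8"
  shows "mut' (nd!mm) B (nd!i) (nd!j) = mutL mm L ! i ! j"
proof -
  have h: "\<And>a b. a < 8 \<Longrightarrow> b < 8 \<Longrightarrow> L!a!b = B (nd!a) (nd!b)" using base by simp
  have eq: "\<And>j. j < 8 \<Longrightarrow> (nd!j = nd!mm) = (j = mm)" using inj by blast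
  show ?thesis
    unfolding mutL_nth[OF ij] mutf_def mut'_def mEB_def Let_def
    using ij mm by (simp add: h eq)
qed

lemma corr_seq:
  assumes base: "\<And>i j. i < 8 \<Longrightarrow> j < 8 \<Longrightarrow> B (nd!i) (nd!j) = L!i!j"
    and inj: "\<And>i mm. i < 8 \<Longrightarrow> mm \<in> {2,3,4,5} \<Longrightarrow> nd!i = nd!mm \<Longrightarrow> i = mm"
    and ij: "i < 8" "j < 8"
  shows "mut' (nd!2) (mut' (nd!5) (mut' (nd!4) (mut' (nd!2) (mut' (nd!3) (mut' (nd!5)
     (mut' (nd!2) (mut' (nd!4) (mut' (nd!3) (mut' (nd!2) B))))))))) (nd!i) (nd!j) = mutseqL L ! i ! j"
proof -
  note c = corr[where nd=nd]
  have i2: "\<And>i. i < 8 \<Longrightarrow> nd!i = nd!2 \<Longrightarrow> i = 2" using inj by blast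
  have i3: "\<And>i. i < 8 \<Longrightarrow> nd!i = nd!3 \<Longrightarrow> i = 3" using inj by blast
  have i4: "\<And>i. i < 8 \<Longrightarrow> nd!i = nd!4 \<Longrightarrow> i = 4" using inj by blast
  have i5: "\<And>i. i < 8 \<Longrightarrow> nd!i = nd!5 \<Longrightarrow> i = 5" using inj by blast
  have h1: "\<And>i j. i < 8 \<Longrightarrow> j < 8 \<Longrightarrow> mut' (nd!2) B (nd!i) (nd!j) = mutL 2 L ! i ! j"
    by (rule c[OF base _ i2]) auto
  have h2: "\<And>i j. i < 8 \<Longrightarrow> j < 8 \<Longrightarrow> mut' (nd!3) (mut' (nd!2) B) (nd!i) (nd!j) = mutL 3 (mutL 2 L) ! i ! j"
    by (rule c[OF h1 _ i3]) auto
  have h3: "\<And>i j. i < 8 \<Longrightarrow> j < 8 \<Longrightarrow> mut' (nd!4) (mut' (nd!3) (mut' (nd!2) B)) (nd!i) (nd!j) = mutL 4 (mutL 3 (mutL 2 L)) ! i ! j"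
    by (rule c[OF h2 _ i4]) auto
  have h4: "\<And>i j. i < 8 \<Longrightarrow> j < 8 \<Longrightarrow> mut' (nd!2) (mut' (nd!4) (mut' (nd!3) (mut' (nd!2) B))) (nd!i) (nd!j) = mutL 2 (mutL 4 (mutL 3 (mutL 2 L))) ! i ! j"
    by (rule c[OF h3 _ i2]) auto
  have h5: "\<And>i j. i < 8 \<Longrightarrow> j < 8 \<Longrightarrow> mut' (nd!5) (mut' (nd!2) (mut' (nd!4) (mut' (nd!3) (mut' (nd!2) B)))) (nd!i) (nd!j) = mutL 5 (mutL 2 (mutL 4 (mutL 3 (mutL 2 L)))) ! i ! j"
    by (rule c[OF h4 _ i5]) auto
  have h6: "\<And>i j. i < 8 \<Longrightarrow> j < 8 \<Longrightarrow> mut' (nd!3) (mut' (nd!5) (mut' (nd!2) (mut' (nd!4) (mut' (nd!3) (mut' (nd!2) B))))) (nd!i) (nd!j) = mutL 3 (mutL 5 (mutL 2 (mutL 4 (mutL 3 (mutL 2 L))))) ! i ! j"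
    by (rule c[OF h5 _ i3]) auto
  have h7: "\<And>i j. i < 8 \<Longrightarrow> j < 8 \<Longrightarrow> mut' (nd!2) (mut' (nd!3) (mut' (nd!5) (mut' (nd!2) (mut' (nd!4) (mut' (nd!3) (mut' (nd!2) B)))))) (nd!i) (nd!j) = mutL 2 (mutL 3 (mutL 5 (mutL 2 (mutL 4 (mutL 3 (mutL 2 L)))))) ! i ! j"
    by (rule c[OF h6 _ i2]) auto
  have h8: "\<And>i j. i < 8 \<Longrightarrow> j < 8 \<Longrightarrow> mut' (nd!4) (mut' (nd!2) (mut' (nd!3) (mut' (nd!5) (mut' (nd!2) (mut' (nd!4) (mut' (nd!3) (mut' (nd!2) B))))))) (nd!i) (nd!j) = mutL 4 (mutL 2 (mutL 3 (mutL 5 (mutL 2 (mutL 4 (mutL 3 (mutL 2 L))))))) ! i ! j"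
    by (rule c[OF h7 _ i4]) auto
  have h9: "\<And>i j. i < 8 \<Longrightarrow> j < 8 \<Longrightarrow> mut' (nd!5) (mut' (nd!4) (mut' (nd!2) (mut' (nd!3) (mut' (nd!5) (mut' (nd!2) (mut' (nd!4) (mut' (nd!3) (mut' (nd!2) B)))))))) (nd!i) (nd!j) = mutL 5 (mutL 4 (mutL 2 (mutL 3 (mutL 5 (mutL 2 (mutL 4 (mutL 3 (mutL 2 L)))))))) ! i ! j"
    by (rule c[OF h8 _ i5]) auto
  have h10: "\<And>i j. i < 8 \<Longrightarrow> j < 8 \<Longrightarrow> mut' (nd!2) (mut' (nd!5) (mut' (nd!4) (mut' (nd!2) (mut' (nd!3) (mut' (nd!5) (mut' (nd!2) (mut' (nd!4) (mut' (nd!3) (mut' (nd!2) B))))))))) (nd!i) (nd!j) = mutL 2 (mutL 5 (mutL 4 (mutL 2 (mutL 3 (mutL 5 (mutL 2 (mutL 4 (mutL 3 (mutL 2 L))))))))) ! i ! j"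
    by (rule c[OF h9 _ i2]) auto
  show ?thesis using h10[OF ij] by (simp add: mutseqL_def)
qed


lemma win:
  fixes jj :: "nat \<Rightarrow> 'i"
  assumes jj: "jj \<in> I_infty" and k: "1 \<le> k" and lx: "jj k = x" "jj (k+2) = x" "jj (k+4) = x"
    and ly: "jj (k+1) = y" "jj (k+3) = y" "jj (k+5) = y" and xy: "x \<noteq> y"
  shows "succ_idx jj k = k+2" "succ_idx jj (k+1) = k+3" "succ_idx jj (k+2) = k+4" "succ_idx jj (k+3) = k+5"
    "pred_idx jj (k+2) = k" "pred_idx jj (k+3) = k+1" "pred_idx jj (k+4) = k+2" "pred_idx jj (k+5) = k+3"
    "k+5 < succ_idx jj (k+4)" "jj (succ_idx jj (k+4)) = x"
    "k+5 < succ_idx jj (k+5)" "jj (succ_idx jj (k+5)) = y"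
    "pred_idx jj k < k" "pred_idx jj (k+1) < k"
    "1 \<le> pred_idx jj k \<Longrightarrow> jj (pred_idx jj k) = x"
    "1 \<le> pred_idx jj k \<Longrightarrow> succ_idx jj (pred_idx jj k) = k"
    "1 \<le> pred_idx jj (k+1) \<Longrightarrow> jj (pred_idx jj (k+1)) = y"
    "1 \<le> pred_idx jj (k+1) \<Longrightarrow> succ_idx jj (pred_idx jj (k+1)) = k+1"
proof -
  show "succ_idx jj k = k+2" 
  proof (rule succ_eqI)
    fix z assume "k < z" "z < k+2" then have "z = k+1" by auto
    then show "jj z \<noteq> jj k" using lx ly xy by auto
  qed (use lx ly in auto)
  show "succ_idx jj (k+1) = k+3" 
  proof (rule succ_eqI)
    fix z assume "(k+1) < z" "z < k+3" then have "z = k+2" by auto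
    then show "jj z \<noteq> jj (k+1)" using lx ly xy by auto
  qed (use lx ly in auto)
  show "succ_idx jj (k+2) = k+4" 
  proof (rule succ_eqI)
    fix z assume "(k+2) < z" "z < k+4" then have "z = k+3" by auto
    then show "jj z \<noteq> jj (k+2)" using lx ly xy by auto
  qed (use lx ly in auto)
  show "succ_idx jj (k+3) = k+5" 
  proof (rule succ_eqI)
    fix z assume "(k+3) < z" "z < k+5" then have "z = k+4" by auto
    then show "jj z \<noteq> jj (k+3)" using lx ly xy by auto
  qed (use lx ly in auto)
  show "pred_idx jj (k+2) = k" 
  proof (rule pred_eqI)
    fix z assume "k < z" "z < k+2" then have "z = k+1" by auto
    then show "jj z \<noteq> jj (k+2)" using lx ly xy by auto
  qed (use lx ly k in auto)
  show "pred_idx jj (k+3) = k+1" 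
  proof (rule pred_eqI)
    fix z assume "k+1 < z" "z < k+3" then have "z = k+2" by auto
    then show "jj z \<noteq> jj (k+3)" using lx ly xy by auto
  qed (use lx ly k in auto)
  show "pred_idx jj (k+4) = k+2" 
  proof (rule pred_eqI)
    fix z assume "k+2 < z" "z < k+4" then have "z = k+3" by auto
    then show "jj z \<noteq> jj (k+4)" using lx ly xy by auto
  qed (use lx ly k in auto)
  show "pred_idx jj (k+5) = k+3" 
  proof (rule pred_eqI)
    fix z assume "k+3 < z" "z < k+5" then have "z = k+4" by auto
    then show "jj z \<noteq> jj (k+5)" using lx ly xy by auto
  qed (use lx ly k in auto)
  show "k+5 < succ_idx jj (k+4)" "jj (succ_idx jj (k+4)) = x"
  proof -
    have "k+4 < succ_idx jj (k+4)" "jj (succ_idx jj (k+4)) = x" using succ_props[OF jj, of "k+4"] lx by auto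
    moreover have "succ_idx jj (k+4) \<noteq> k+5" using \<open>jj (succ_idx jj (k+4)) = x\<close> ly xy by auto
    ultimately show "k+5 < succ_idx jj (k+4)" "jj (succ_idx jj (k+4)) = x" by auto
  qed
  show "k+5 < succ_idx jj (k+5)" "jj (succ_idx jj (k+5)) = y"
    using succ_props[OF jj, of "k+5"] ly by auto
  show p1: "pred_idx jj k < k" using pred_lt k by auto
  show "1 \<le> pred_idx jj k \<Longrightarrow> jj (pred_idx jj k) = x"
    "1 \<le> pred_idx jj k \<Longrightarrow> succ_idx jj (pred_idx jj k) = k"
    using pred_pos[of jj k] succ_pred[of jj k] lx by auto
  show p2x: "1 \<le> pred_idx jj (k+1) \<Longrightarrow> jj (pred_idx jj (k+1)) = y"
    "1 \<le> pred_idx jj (k+1) \<Longrightarrow> succ_idx jj (pred_idx jj (k+1)) = k+1"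
    using pred_pos[of jj "k+1"] succ_pred[of jj "k+1"] ly by auto
  show "pred_idx jj (k+1) < k"
  proof -
    have "pred_idx jj (k+1) < k+1" using pred_lt[of "k+1" jj] by auto
    moreover have "pred_idx jj (k+1) \<noteq> k" using p2x lx xy k by auto
    ultimately show ?thesis by auto
  qed
qed


lemma tau_eq_iff: "(v = tau k X) = (tau k v = X)" by (metis tau_tau)

lemma prod3:
  fixes x y :: int
  assumes "x \<le> 0" "y \<le> 0" "y * x = 3"
  shows "(x, y) \<in> {(-1,-3),(-3,-1)}"
proof -
  have x0: "x \<noteq> 0" "y \<noteq> 0" using assms by auto
  then have y1: "y \<le> -1" "x \<le> -1" using assms by auto
  have "(y + 1) * x \<ge> 0" using y1 by (intro mult_nonpos_nonpos) auto
  then have "x \<ge> -3" using assms by (simp add: algebra_simps)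
  then have "x = -1 \<or> x = -2 \<or> x = -3" using y1 by auto
  then show ?thesis using assms by (auto; presburger)
qed

locale sixm =
  fixes ii ii' :: "nat \<Rightarrow> 'i" and k :: nat and a b :: 'i
  assumes I: "ii \<in> I_infty" and I': "ii' \<in> I_infty" and k: "1 \<le> k"
    and la: "ii k = a" "ii (k+2) = a" "ii (k+4) = a"
    and lb: "ii (k+1) = b" "ii (k+3) = b" "ii (k+5) = b"
    and la': "ii' (k+1) = a" "ii' (k+3) = a" "ii' (k+5) = a"
    and lb': "ii' k = b" "ii' (k+2) = b" "ii' (k+4) = b"
    and out: "\<And>u. 1 \<le> u \<Longrightarrow> u < k \<or> k+5 < u \<Longrightarrow> ii' u = ii u"
    and ab: "a \<noteq> b"
begin

lemmas W = win[OF I k la lb ab]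
lemmas W' = win[OF I' k lb' la' ab[symmetric]]

lemma ii'_tau: assumes x: "1 \<le> x" shows "ii' x = ii (tau k x)"
proof (cases "x < k \<or> k+5 < x")
  case True then show ?thesis using out[OF x True] tau_out[OF True] by simp
next
  case False
  then have "x = k \<or> x = k+1 \<or> x = k+2 \<or> x = k+3 \<or> x = k+4 \<or> x = k+5" by auto
  then show ?thesis using la lb la' lb' by (auto simp: tau_eq)
qed

lemma succ_tau: assumes x: "1 \<le> x" shows "succ_idx ii' x = tau k (succ_idx ii (tau k x))"
proof (cases "x < k \<or> k+5 < x")
  case False
  then have xs: "x = k \<or> x = k+1 \<or> x = k+2 \<or> x = k+3 \<or> x = k+4 \<or> x = k+5" by auto
  have e4: "succ_idx ii' (k+4) = succ_idx ii (k+5)"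
  proof (rule succ_eqI)
    show "k+4 < succ_idx ii (k+5)" using W(11) by simp
    show "ii' (succ_idx ii (k+5)) = ii' (k+4)" using out[of "succ_idx ii (k+5)"] W(11,12) lb' by simp
    fix z assume z: "k+4 < z" "z < succ_idx ii (k+5)"
    show "ii' z \<noteq> ii' (k+4)"
    proof (cases "z = k+5")
      case True then show ?thesis using la' lb' ab by simp
    next
      case False
      then have z5: "k+5 < z" using z by simp
      then have "ii' z = ii z" using out[of z] by simp
      moreover have "ii z \<noteq> ii (k+5)" using succ_between[of "k+5" z ii] z5 z(2) by simp
      ultimately show ?thesis using lb lb' by simp
    qed
  qed
  have e5: "succ_idx ii' (k+5) = succ_idx ii (k+4)"
  proof (rule succ_eqI)
    show "k+5 < succ_idx ii (k+4)" using W(9) by simp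
    show "ii' (succ_idx ii (k+4)) = ii' (k+5)" using out[of "succ_idx ii (k+4)"] W(9,10) la' by simp
    fix z assume z: "k+5 < z" "z < succ_idx ii (k+4)"
    then have "ii' z = ii z" using out[of z] by simp
    moreover have "ii z \<noteq> ii (k+4)" using succ_between[of "k+4" z ii] z by simp
    ultimately show "ii' z \<noteq> ii' (k+5)" using la la' by simp
  qed
  have t4: "tau k (succ_idx ii (k+4)) = succ_idx ii (k+4)" using tau_out W(9) by simp
  have t5: "tau k (succ_idx ii (k+5)) = succ_idx ii (k+5)" using tau_out W(11) by simp
  have tk: "tau k k = k+1" "tau k (k+1) = k" "tau k (k+2) = k+3" "tau k (k+3) = k+2"
    "tau k (k+4) = k+5" "tau k (k+5) = k+4" by (simp_all add: tau_eq)
  from xs show ?thesis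
  proof (elim disjE)
    assume "x = k" then show ?thesis using W(2) W'(1) tk by simp
  next
    assume "x = k+1" then show ?thesis using W(1) W'(2) tk by simp
  next
    assume "x = k+2" then show ?thesis using W(4) W'(3) tk by simp
  next
    assume "x = k+3" then show ?thesis using W(3) W'(4) tk by simp
  next
    assume "x = k+4" then show ?thesis using e4 t5 tk by simp
  next
    assume "x = k+5" then show ?thesis using e5 t4 tk by simp
  qed
next
  case True
  have tx: "tau k x = x" using tau_out[OF True] .
  define y where "y = succ_idx ii x"
  have xy: "x < y" "ii y = ii x" using succ_props[OF I, of x] y_def by auto
  have btw: "\<And>z. x < z \<Longrightarrow> z < y \<Longrightarrow> ii z \<noteq> ii x" using succ_between y_def by blast
  have ix: "ii' x = ii x" using out[OF x True] .
  show ?thesis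
  proof (cases "y < k \<or> k+5 < y")
    case yo: True
    have "succ_idx ii' x = y"
    proof (rule succ_eqI)
      show "x < y" by fact
      show "ii' y = ii' x" using out[of y] yo xy x ix by simp
      fix z assume z: "x < z" "z < y"
      show "ii' z \<noteq> ii' x"
      proof (cases "z < k \<or> k+5 < z")
        case True then show ?thesis using out[of z] z x btw ix by simp
      next
        case False
        then have tz: "k \<le> tau k z \<and> tau k z \<le> k+5" using tau_W by auto
        have "x < k" "k+5 < y" using False True yo z by auto
        then have "x < tau k z" "tau k z < y" using tz by auto
        then show ?thesis using ii'_tau[of z] btw ix z x by simp
      qed
    qed
    then show ?thesis using tx tau_out[OF yo] y_def by simp
  next
    case yi: False
    have py: "pred_idx ii y = x" using pred_succ[OF I x] y_def by simp
    have "y = k \<or> y = k+1 \<or> y = k+2 \<or> y = k+3 \<or> y = k+4 \<or> y = k+5" using yi by auto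
    moreover have "y \<noteq> k+2" "y \<noteq> k+3" "y \<noteq> k+4" "y \<noteq> k+5" using py W(5-8) True by auto
    ultimately have "y = k \<or> y = k+1" by blast
    then show ?thesis
    proof
      assume yk: "y = k"
      have "succ_idx ii' x = k+1"
      proof (rule succ_eqI)
        show "x < k+1" using xy yk by simp
        show "ii' (k+1) = ii' x" using la' ix xy yk la by simp
        fix z assume z: "x < z" "z < k+1"
        show "ii' z \<noteq> ii' x"
        proof (cases "z = k")
          case True then show ?thesis using lb' ix xy yk la ab by simp
        next
          case False
          then show ?thesis using out[of z] z x btw ix yk by simp
        qed
      qed
      then show ?thesis using tx yk y_def by (simp add: tau_eq)
    next
      assume yk: "y = k+1"
      have xk: "x < k" using xy yk True by auto
      have "succ_idx ii' x = k"
      proof (rule succ_eqI)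
        show "x < k" by fact
        show "ii' k = ii' x" using lb' ix xy yk lb by simp
        fix z assume z: "x < z" "z < k"
        show "ii' z \<noteq> ii' x" using out[of z] z x btw ix yk by simp
      qed
      then show ?thesis using tx yk y_def by (simp add: tau_eq)
    qed
  qed
qed

lemma pred_tau: "pred_idx ii' x = tau k (pred_idx ii (tau k x))"
proof (cases "1 \<le> pred_idx ii (tau k x)")
  case True
  define y where "y = pred_idx ii (tau k x)"
  have s: "succ_idx ii y = tau k x" using succ_pred[OF True] y_def by simp
  have ty: "1 \<le> tau k y" using tau_ge1[OF k] True y_def by simp
  have "succ_idx ii' (tau k y) = x" using succ_tau[OF ty] s by simp
  then have "pred_idx ii' x = tau k y" using pred_succ[OF I' ty] by simp
  then show ?thesis using y_def by simp
next
  case False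
  then have y0: "pred_idx ii (tau k x) = 0" by simp
  have "pred_idx ii' x = 0"
  proof (rule ccontr)
    assume "pred_idx ii' x \<noteq> 0"
    then have z: "1 \<le> pred_idx ii' x" by simp
    define zz where "zz = pred_idx ii' x"
    have z1: "1 \<le> zz" using z zz_def by simp
    have "succ_idx ii' zz = x" using succ_pred[OF z] zz_def by simp
    then have "tau k (succ_idx ii (tau k zz)) = x" using succ_tau[OF z1] by simp
    then have "succ_idx ii (tau k zz) = tau k x" by (metis tau_tau)
    moreover have tz: "1 \<le> tau k zz" using tau_ge1[OF k] z1 by simp
    ultimately have "pred_idx ii (tau k x) = tau k zz" using pred_succ[OF I tz] by simp
    then show False using y0 tz by simp
  qed
  then show ?thesis using y0 tau_0[OF k] by simp
qed

lemma succ_notW: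
  assumes x: "1 \<le> x" "x < k \<or> k+5 < x" "x \<noteq> pred_idx ii k" "x \<noteq> pred_idx ii (k+1)"
  shows "succ_idx ii x < k \<or> k+5 < succ_idx ii x"
proof (rule ccontr)
  assume "\<not> ?thesis"
  then have "succ_idx ii x = k \<or> succ_idx ii x = k+1 \<or> succ_idx ii x = k+2 \<or> succ_idx ii x = k+3 \<or>
     succ_idx ii x = k+4 \<or> succ_idx ii x = k+5" by auto
  moreover have "pred_idx ii (succ_idx ii x) = x" using pred_succ[OF I x(1)] .
  ultimately show False using x W(5-8) by auto
qed

lemma succ'_eq:
  assumes x: "1 \<le> x" "x < k \<or> k+5 < x" "x \<noteq> pred_idx ii k" "x \<noteq> pred_idx ii (k+1)"
  shows "succ_idx ii' x = succ_idx ii x"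
  using succ_tau[OF x(1)] tau_out[OF x(2)] tau_out[OF succ_notW[OF x]] by simp

lemma succW: "k \<le> m \<Longrightarrow> m \<le> k+3 \<Longrightarrow> succ_idx ii m = m+2"
proof -
  assume "k \<le> m" "m \<le> k+3"
  then have "m = k \<or> m = k+1 \<or> m = k+2 \<or> m = k+3" by auto
  then show ?thesis using W(1-4) by auto
qed

lemma predW: "k \<le> m \<Longrightarrow> m \<le> k+3 \<Longrightarrow> pred_idx ii m = pred_idx ii k \<or> pred_idx ii m = pred_idx ii (k+1) \<or> (k \<le> pred_idx ii m \<and> pred_idx ii m \<le> k+1)"
proof -
  assume "k \<le> m" "m \<le> k+3"
  then have "m = k \<or> m = k+1 \<or> m = k+2 \<or> m = k+3" by auto
  then show ?thesis using W(5-6) by auto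
qed

lemma exch_zero:
  assumes "v \<noteq> succ_idx jj u" "v \<noteq> pred_idx jj u"
    "\<not> (u < v \<and> v < succ_idx jj u \<and> succ_idx jj u < succ_idx jj v)"
    "\<not> (v < u \<and> u < succ_idx jj v \<and> succ_idx jj v < succ_idx jj u)"
  shows "exch_matrix C jj u v = 0"
  using assms unfolding exch_matrix_def by auto

lemma rowzero:
  assumes u: "1 \<le> u" "u < k \<or> k+5 < u" "u \<noteq> pred_idx ii k" "u \<noteq> pred_idx ii (k+1)"
    and m: "k \<le> m" "m \<le> k+3"
  shows "exch_matrix C ii u m = 0"
proof -
  have s: "succ_idx ii u < k \<or> k+5 < succ_idx ii u" using succ_notW[OF u] .
  have sm: "succ_idx ii m = m+2" using succW m by blast
  have "pred_idx ii u \<noteq> m"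
  proof
    assume "pred_idx ii u = m"
    then have "succ_idx ii m = u" using succ_pred[of ii u] m k by auto
    then show False using sm u m by auto
  qed
  moreover have "m \<noteq> succ_idx ii u" using s m by auto
  moreover have "\<not> (u < m \<and> m < succ_idx ii u \<and> succ_idx ii u < succ_idx ii m)" using s sm m by auto
  moreover have "\<not> (m < u \<and> u < succ_idx ii m \<and> succ_idx ii m < succ_idx ii u)" using u sm m by auto
  ultimately show ?thesis by (intro exch_zero) auto
qed

lemma colzero:
  assumes v: "1 \<le> v" "v < k \<or> k+5 < v" "v \<noteq> pred_idx ii k" "v \<noteq> pred_idx ii (k+1)"
    and m: "k \<le> m" "m \<le> k+3"
  shows "exch_matrix C ii m v = 0"
proof -
  have s: "succ_idx ii v < k \<or> k+5 < succ_idx ii v" using succ_notW[OF v] .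
  have sm: "succ_idx ii m = m+2" using succW m by blast
  have pm: "pred_idx ii m \<noteq> v" using predW[OF m] v by auto
  moreover have "v \<noteq> succ_idx ii m" using sm v m by auto
  moreover have "\<not> (m < v \<and> v < succ_idx ii m \<and> succ_idx ii m < succ_idx ii v)" using v sm m by auto
  moreover have "\<not> (v < m \<and> m < succ_idx ii v \<and> succ_idx ii v < succ_idx ii m)" using s sm m by auto
  ultimately show ?thesis using pm by (intro exch_zero) auto
qed

end


context sixm begin

lemma main:
  assumes cab: "(C a b, C b a) \<in> {(-1,-3),(-3,-1)}"
    and check: "\<And>cab cba ea eb P sab. (cab,cba) \<in> {(-1,-3),(-3,-1)} \<Longrightarrow> (P \<longrightarrow> ea \<and> eb) \<Longrightarrow>
      permL [0,1,3,2,5,4,7,6] (mutseqL (Lblk cab cba ea eb P sab)) =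
         permL [1,0,2,3,4,5,6,7] (Lblk cba cab eb ea (ea \<and> eb \<and> \<not> P) (\<not>sab))"
  shows "exch_matrix C ii' =
    perm_mat (swap_adj (k+4)) (perm_mat (swap_adj (k+2)) (perm_mat (swap_adj k)
      (mutate k (mutate (k+3) (mutate (k+2) (mutate k (mutate (k+1) (mutate (k+3)
        (mutate k (mutate (k+2) (mutate (k+1) (mutate k (exch_matrix C ii)))))))))))))"
proof -
  define B where "B = exch_matrix C ii"
  have zB: "zr B" by (simp add: zr_def exch_matrix_def B_def)
  have eqm: "mutate k (mutate (k+3) (mutate (k+2) (mutate k (mutate (k+1) (mutate (k+3)
        (mutate k (mutate (k+2) (mutate (k+1) (mutate k B))))))))) = mseq k B"
    by (rule mutate_mseq[OF k zB])
  define MM where "MM = mseq k B"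
  have zM: "zr MM" using zr_mseq[OF k zB] MM_def by simp
  define p1 where "p1 = pred_idx ii k"
  define p2 where "p2 = pred_idx ii (k+1)"
  define sa where "sa = succ_idx ii (k+4)"
  define sb where "sb = succ_idx ii (k+5)"
  have p1k: "p1 < k" "p2 < k" using W(13,14) p1_def p2_def by auto
  have p12: "1 \<le> p1 \<Longrightarrow> 1 \<le> p2 \<Longrightarrow> p1 \<noteq> p2" using W(15,17) ab p1_def p2_def by auto
  have sab: "sa \<noteq> sb" using W(10,12) ab sa_def sb_def by auto
  have sak: "k+5 < sa" "k+5 < sb" using W(9,11) sa_def sb_def by auto
  have tp: "tau k p1 = p1" "tau k p2 = p2" using p1k tau_out by auto
  have p1': "pred_idx ii' (k+1) = p1" using pred_tau[of "k+1"] tp p1_def by (simp add: tau_eq)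
  have p2': "pred_idx ii' k = p2" using pred_tau[of "k"] tp p2_def by (simp add: tau_eq)
  have sa': "succ_idx ii' (k+5) = sa"
    using succ_tau[of "k+5"] tau_out[of "succ_idx ii (k+4)" k] sak sa_def by (simp add: tau_eq)
  have sb': "succ_idx ii' (k+4) = sb"
    using succ_tau[of "k+4"] tau_out[of "succ_idx ii (k+5)" k] sak sb_def by (simp add: tau_eq)
  define nd where "nd = [p1, p2, k, k+1, k+2, k+3, k+4, k+5]"
  define L where "L = Lblk (C a b) (C b a) (1 \<le> p1) (1 \<le> p2) (1 \<le> p1 \<and> 1 \<le> p2 \<and> p1 < p2) (sa < sb)"
  have blk: "map (\<lambda>u. map (exch_matrix C ii u) nd) nd = L"
    using block[OF I k la lb ab, of C] unfolding nd_def L_def p1_def p2_def sa_def sb_def .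
  have lnd: "length nd = 8" by (simp add: nd_def)
  have Bnd: "\<And>i j. i < 8 \<Longrightarrow> j < 8 \<Longrightarrow> B (nd!i) (nd!j) = L!i!j"
  proof -
    fix i j :: nat assume ij: "i < 8" "j < 8"
    have "L!i!j = (map (\<lambda>u. map (exch_matrix C ii u) nd) nd)!i!j" using blk by simp
    also have "\<dots> = B (nd!i) (nd!j)" using lnd ij by (simp add: B_def)
    finally show "B (nd!i) (nd!j) = L!i!j" by simp
  qed
  have inj: "\<And>i mm. i < 8 \<Longrightarrow> mm \<in> {2,3,4,5} \<Longrightarrow> nd!i = nd!mm \<Longrightarrow> i = mm"
  proof -
    fix i mm :: nat assume "i < 8" "mm \<in> {2,3,4,5}" "nd!i = nd!mm"
    then show "i = mm" using lt8[of i] p1k by (auto simp: nd_def)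
  qed
  have nd2: "nd!2 = k" "nd!3 = k+1" "nd!4 = k+2" "nd!5 = k+3" by (simp_all add: nd_def)
  have Mnd: "\<And>i j. i < 8 \<Longrightarrow> j < 8 \<Longrightarrow> MM (nd!i) (nd!j) = mutseqL L ! i ! j"
  proof -
    fix i j :: nat assume ij: "i < 8" "j < 8"
    have "MM = mut' (nd!2) (mut' (nd!5) (mut' (nd!4) (mut' (nd!2) (mut' (nd!3) (mut' (nd!5)
     (mut' (nd!2) (mut' (nd!4) (mut' (nd!3) (mut' (nd!2) B)))))))))"
      unfolding MM_def mseq_def nd2 by (rule refl)
    then show "MM (nd!i) (nd!j) = mutseqL L ! i ! j"
      using corr_seq[OF Bnd inj ij] by (simp only:)
  qed
  define nd' where "nd' = [p2, p1, k, k+1, k+2, k+3, k+4, k+5]"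
  define L' where "L' = Lblk (C b a) (C a b) (1 \<le> p2) (1 \<le> p1) (1 \<le> p2 \<and> 1 \<le> p1 \<and> p2 < p1) (sb < sa)"
  have blk': "map (\<lambda>u. map (exch_matrix C ii' u) nd') nd' = L'"
    using block[OF I' k lb' la' ab[symmetric], of C] unfolding nd'_def L'_def p1' p2' sa' sb' .
  have lnd': "length nd' = 8" by (simp add: nd'_def)
  have Bnd': "\<And>i j. i < 8 \<Longrightarrow> j < 8 \<Longrightarrow> exch_matrix C ii' (nd'!i) (nd'!j) = L'!i!j"
  proof -
    fix i j :: nat assume ij: "i < 8" "j < 8"
    have "L'!i!j = (map (\<lambda>u. map (exch_matrix C ii' u) nd') nd')!i!j" using blk' by simp
    also have "\<dots> = exch_matrix C ii' (nd'!i) (nd'!j)" using lnd' ij by simp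
    finally show "exch_matrix C ii' (nd'!i) (nd'!j) = L'!i!j" by simp
  qed
  have chk: "permL [0,1,3,2,5,4,7,6] (mutseqL L) = permL [1,0,2,3,4,5,6,7] L'"
  proof -
    have e1: "(1 \<le> p1 \<and> 1 \<le> p2 \<and> \<not> (1 \<le> p1 \<and> 1 \<le> p2 \<and> p1 < p2)) = (1 \<le> p2 \<and> 1 \<le> p1 \<and> p2 < p1)"
      using p12 by auto
    have e2: "(\<not> sa < sb) = (sb < sa)" using sab by auto
    show ?thesis using check[OF cab, of "1 \<le> p1 \<and> 1 \<le> p2 \<and> p1 < p2" "1 \<le> p1" "1 \<le> p2" "sa < sb"]
      unfolding L_def L'_def e1 e2 by simp
  qed
  define tl8 where "tl8 = [0,1,3,2,5,4,7,6::nat]"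
  define sw8 where "sw8 = [1,0,2,3,4,5,6,7::nat]"
  have tl_lt: "\<And>i. i < 8 \<Longrightarrow> tl8!i < 8"
  proof -
    fix i :: nat assume "i < 8" then show "tl8!i < 8" using lt8[of i] by (auto simp: tl8_def)
  qed
  have sw_lt: "\<And>i. i < 8 \<Longrightarrow> sw8!i < 8"
  proof -
    fix i :: nat assume "i < 8" then show "sw8!i < 8" using lt8[of i] by (auto simp: sw8_def)
  qed
  have tau_nd: "\<And>i. i < 8 \<Longrightarrow> tau k (nd!i) = nd!(tl8!i)"
  proof -
    fix i :: nat assume "i < 8"
    then show "tau k (nd!i) = nd!(tl8!i)" using lt8[of i] tp by (auto simp: nd_def tl8_def tau_eq)
  qed
  have nd_sw: "\<And>i. i < 8 \<Longrightarrow> nd!i = nd'!(sw8!i)"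
  proof -
    fix i :: nat assume "i < 8"
    then show "nd!i = nd'!(sw8!i)" using lt8[of i] by (auto simp: nd_def nd'_def sw8_def)
  qed
  define inS where "inS x \<longleftrightarrow> x = p1 \<or> x = p2 \<or> (k \<le> x \<and> x \<le> k+5)" for x
  have inS_nd: "\<And>x. inS x \<Longrightarrow> \<exists>i<8. x = nd!i"
  proof -
    fix x assume "inS x"
    then have "x = p1 \<or> x = p2 \<or> x = k \<or> x = k+1 \<or> x = k+2 \<or> x = k+3 \<or> x = k+4 \<or> x = k+5"
      unfolding inS_def by auto
    then have "x \<in> set nd" unfolding nd_def by auto
    then show "\<exists>i<8. x = nd!i" using lnd by (metis in_set_conv_nth)
  qed
  show ?thesis
    unfolding B_def[symmetric] eqm MM_def[symmetric]
  proof (intro ext)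
    fix u v
    show "exch_matrix C ii' u v = perm_mat (swap_adj (k+4)) (perm_mat (swap_adj (k+2)) (perm_mat (swap_adj k) MM)) u v"
      unfolding perm_final
    proof (cases "u = 0 \<or> v = 0")
      case True
      then show "exch_matrix C ii' u v = MM (tau k u) (tau k v)"
        using zM tau_0[OF k] unfolding zr_def exch_matrix_def by auto
    next
      case False
      then have u1: "1 \<le> u" and v1: "1 \<le> v" by auto
      show "exch_matrix C ii' u v = MM (tau k u) (tau k v)"
      proof (cases "inS u \<and> inS v")
        case True
        then obtain i j where ij: "i < 8" "j < 8" "u = nd!i" "v = nd!j" using inS_nd by blast
        have "exch_matrix C ii' u v = L' ! (sw8!i) ! (sw8!j)"
          using Bnd'[OF sw_lt[OF ij(1)] sw_lt[OF ij(2)]] nd_sw ij by simp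
        also have "\<dots> = permL sw8 L' ! i ! j" using permL_nth ij by simp
        also have "\<dots> = permL tl8 (mutseqL L) ! i ! j" using chk by (simp add: tl8_def sw8_def)
        also have "\<dots> = mutseqL L ! (tl8!i) ! (tl8!j)" using permL_nth ij by simp
        also have "\<dots> = MM (nd!(tl8!i)) (nd!(tl8!j))" using Mnd tl_lt ij by simp
        also have "\<dots> = MM (tau k u) (tau k v)" using tau_nd ij by simp
        finally show ?thesis .
      next
        case False
        then have nS: "\<not> inS u \<or> \<not> inS v" by simp
        have rowcase: "\<And>x. 1 \<le> x \<Longrightarrow> \<not> inS x \<Longrightarrow> (x < k \<or> k+5 < x) \<and> (succ_idx ii' x < k \<or> k+5 < succ_idx ii' x)
                   \<and> x \<noteq> pred_idx ii k \<and> x \<noteq> pred_idx ii (k+1)"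
        proof -
          fix x assume x: "1 \<le> x" "\<not> inS x"
          then have xo: "x < k \<or> k+5 < x" "x \<noteq> pred_idx ii k" "x \<noteq> pred_idx ii (k+1)"
            unfolding inS_def p1_def p2_def by auto
          show "?thesis x" using xo succ'_eq[OF x(1) xo] succ_notW[OF x(1) xo] by simp
        qed
        have mono: "(x < y) = (tau k x < tau k y)" if "x < k \<or> k+5 < x \<or> y < k \<or> k+5 < y" for x y
          using tau_mono[OF that] .
        have st: "\<And>x. 1 \<le> x \<Longrightarrow> succ_idx ii (tau k x) = tau k (succ_idx ii' x)"
          using succ_tau by simp
        have pt: "\<And>x. pred_idx ii (tau k x) = tau k (pred_idx ii' x)"
          using pred_tau by simp
        have lhs: "exch_matrix C ii' u v = exch_matrix C ii (tau k u) (tau k v)"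
        proof (rule exch_tau)
          show "ii' u = ii (tau k u)" "ii' v = ii (tau k v)" using ii'_tau u1 v1 by auto
          show "(v = succ_idx ii' u) = (tau k v = succ_idx ii (tau k u))"
            using st[OF u1] tau_eq_iff by metis
          show "(v = pred_idx ii' u) = (tau k v = pred_idx ii (tau k u))"
            using pt tau_eq_iff by metis
          show "(u = 0) = (tau k u = 0)" using u1 tau_ge1[OF k, of u] by auto
          show "(v = 0) = (tau k v = 0)" using v1 tau_ge1[OF k, of v] by auto
          have oo: "((u < k \<or> k+5 < u) \<and> (succ_idx ii' u < k \<or> k+5 < succ_idx ii' u)) \<or>
                    ((v < k \<or> k+5 < v) \<and> (succ_idx ii' v < k \<or> k+5 < succ_idx ii' v))"
            using nS rowcase u1 v1 by blast
          show "(u < v) = (tau k u < tau k v)" "(v < u) = (tau k v < tau k u)"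
            using oo mono by blast+
          show "(v < succ_idx ii' u) = (tau k v < succ_idx ii (tau k u))"
            unfolding st[OF u1] using oo mono by blast
          show "(succ_idx ii' u < succ_idx ii' v) = (succ_idx ii (tau k u) < succ_idx ii (tau k v))"
            unfolding st[OF u1] st[OF v1] using oo mono by blast
          show "(u < succ_idx ii' v) = (tau k u < succ_idx ii (tau k v))"
            unfolding st[OF v1] using oo mono by blast
          show "(succ_idx ii' v < succ_idx ii' u) = (succ_idx ii (tau k v) < succ_idx ii (tau k u))"
            unfolding st[OF u1] st[OF v1] using oo mono by blast
        qed
        show ?thesis
        proof (cases "inS u")
          case False
          have r: "(u < k \<or> k+5 < u) \<and> u \<noteq> pred_idx ii k \<and> u \<noteq> pred_idx ii (k+1)"
            using rowcase[OF u1 False] by blast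
          have tu: "tau k u = u" using tau_out r by blast
          have "MM u (tau k v) = B u (tau k v)" unfolding MM_def
            by (rule mseq_row) (use r u1 rowzero in \<open>auto simp: B_def\<close>)
          then show ?thesis using lhs tu B_def by simp
        next
          case True
          then have F: "\<not> inS v" using nS by simp
          have r: "(v < k \<or> k+5 < v) \<and> v \<noteq> pred_idx ii k \<and> v \<noteq> pred_idx ii (k+1)"
            using rowcase[OF v1 F] by blast
          have tv: "tau k v = v" using tau_out r by blast
          have "MM (tau k u) v = B (tau k u) v" unfolding MM_def
            by (rule mseq_col) (use r v1 colzero in \<open>auto simp: B_def\<close>)
          then show ?thesis using lhs tv B_def by simp
        qed
      qed
    qed
  qed
qed

end


theorem lemma3p11:
  fixes C :: "'i::finite \<Rightarrow> 'i \<Rightarrow> int" and ii ii' :: "nat \<Rightarrow> 'i" and k :: nat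
  assumes "is_simple_cartan_matrix C"
    and "ii \<in> I_infty" and "ii' \<in> I_infty"
    and "six_move C k ii ii'"
  shows "exch_matrix C ii' =
    perm_mat (swap_adj (k+4)) (perm_mat (swap_adj (k+2)) (perm_mat (swap_adj k)
      (mutate k (mutate (k+3) (mutate (k+2) (mutate k (mutate (k+1) (mutate (k+3)
        (mutate k (mutate (k+2) (mutate (k+1) (mutate k (exch_matrix C ii)))))))))))))"
  proof -
  let ?a = "ii k" and ?b = "ii (k+1)"
  have sm: "1 \<le> k"
     "ii k = ii (k+2)" "ii (k+2) = ii (k+4)" "ii (k+4) = ii' (k+1)"
     "ii' (k+1) = ii' (k+3)" "ii' (k+3) = ii' (k+5)"
     "ii (k+1) = ii (k+3)" "ii (k+3) = ii (k+5)" "ii (k+5) = ii' k"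
     "ii' k = ii' (k+2)" "ii' (k+2) = ii' (k+4)"
     "\<forall>u. 1 \<le> u \<and> (u < k \<or> k + 5 < u) \<longrightarrow> ii u = ii' u"
     "C (ii (k+1)) (ii k) * C (ii k) (ii (k+1)) = 3"
    using assms(4) unfolding six_move_def by auto
  have diag: "\<And>i. C i i = 2" and offd: "\<And>i j. i \<noteq> j \<Longrightarrow> C i j \<le> 0"
    using assms(1) unfolding is_simple_cartan_matrix_def by auto
  have ab: "?a \<noteq> ?b"
  proof
    assume "?a = ?b"
    then show False using sm(13) diag by simp
  qed
  have cab: "(C ?a ?b, C ?b ?a) \<in> {(-1,-3),(-3,-1)}"
    using prod3[of "C ?a ?b" "C ?b ?a"] offd ab sm(13) by auto
  interpret sixm ii ii' k ?a ?b
  proof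
    show "ii \<in> I_infty" "ii' \<in> I_infty" "1 \<le> k" using assms sm by auto
    show "ii k = ii k" "ii (k+2) = ii k" "ii (k+4) = ii k" using sm by auto
    show "ii (k+1) = ii (k+1)" "ii (k+3) = ii (k+1)" "ii (k+5) = ii (k+1)" using sm by auto
    show "ii' (k+1) = ii k" "ii' (k+3) = ii k" "ii' (k+5) = ii k" using sm by auto
    show "ii' k = ii (k+1)" "ii' (k+2) = ii (k+1)" "ii' (k+4) = ii (k+1)" using sm by auto
    show "\<And>u. 1 \<le> u \<Longrightarrow> u < k \<or> k+5 < u \<Longrightarrow> ii' u = ii u" using sm(12) by auto
    show "ii k \<noteq> ii (k+1)" by (rule ab)
  qed
  show ?thesis by (rule main[OF cab check_blk])
qed

end
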